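(* There exist constants $C^+,C^->0$ such that for every irrational real number $x$: (a) $B(x)<\infty$ if and only if $B_0(x)+B_0(-x)<\infty$, and in that case $$\bigl|B(x)-2B_0^+(x)\bigr|\le C^+,\qquad\text{where } B_0^+(x)=\tfrac12\bigl(B_0(x)+B_0(-x)\bigr);$$ (b) if $B_0(x)$ and $B_0(-x)$ are both finite, then the series defining $W(x)$ converges and $$\bigl|W(x)-2B_0^-(x)\bigr|\le C^-,\qquad\text{where } B_0^-(x)=\tfrac12\bigl(B_0(x)-B_0(-x)\bigr).$$
   Context: For real $x$ let $\{x\}=x-\lfloor x\rfloor$. The Gauss map is $A(y)=\{1/y\}$ and the by-excess map is $A_0(y)=\lfloor 1/y+1\rfloor-1/y$, for $y\in(0,1)$; for irrational $y\in(0,1)$ both $A(y)$ and $A_0(y)$ are irrational numbers in $(0,1)$ and $A_0(y)=1-A(y)$. Iterates are written $A^j$, $A_0^j$, with $A^0=A_0^0=\mathrm{id}$, and empty products equal $1$. For irrational $x$ put $y=\{x\}$ and define $$B(x)=\sum_{j\ge0}\Bigl(\prod_{k=0}^{j-1}A^k(y)\Bigr)\log\frac{1}{A^j(y)}\in[0,+\infty]\quad(\text{Brjuno function}),$$ $$B_0(x)=\sum_{j\ge0}\Bigl(\prod_{k=0}^{j-1}A_0^k(y)\Bigr)\log\frac{1}{A_0^j(y)}\in[0,+\infty]\quad(\text{semi-Brjuno function}),$$ and the Wilton series $W(x)=\sum_{j\ge0}(-1)^j\Bigl(\prod_{k=0}^{j-1}A^k(y)\Bigr)\log\frac{1}{A^j(y)}$;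 we say $W(x)$ converges if its partial sums converge, and then $W(x)$ denotes the limit. All three are $1$-periodic in $x$ by construction (note that $B_0$ is in general not even). The $j=0$ term of each series is $-\log y$. *)

theory Defs
  imports "HOL-Analysis.Analysis"
begin

definition gauss_map :: "real \<Rightarrow> real" where
  "gauss_map y = frac (1 / y)"

definition excess_map :: "real \<Rightarrow> real" where
  "excess_map y = of_int \<lfloor>1 / y + 1\<rfloor> - 1 / y"

definition brjuno_term :: "(real \<Rightarrow> real) \<Rightarrow> real \<Rightarrow> nat \<Rightarrow> real" where
  "brjuno_term T x j =
     (\<Prod>k<j. (T ^^ k) (frac x)) * ln (1 / (T ^^ j) (frac x))"

definition brjuno :: "real \<Rightarrow> ereal" where
  "brjuno x = (\<Sum>j. ereal (brjuno_term gauss_map x j))"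

definition semi_brjuno :: "real \<Rightarrow> ereal" where
  "semi_brjuno x = (\<Sum>j. ereal (brjuno_term excess_map x j))"

definition wilton_partial :: "real \<Rightarrow> nat \<Rightarrow> real" where
  "wilton_partial x n = (\<Sum>j<n. (-1) ^ j * brjuno_term gauss_map x j)"

definition wilton_converges :: "real \<Rightarrow> bool" where
  "wilton_converges x \<longleftrightarrow> convergent (wilton_partial x)"

definition wilton :: "real \<Rightarrow> real" where
  "wilton x = lim (wilton_partial x)"

end

theory Submission
  imports Defs
begin

definition tm :: "(real \<Rightarrow> real) \<Rightarrow> real \<Rightarrow> nat \<Rightarrow> real" where
  "tm T y j = (\<Prod>k<j. (T ^^ k) y) * ln (1 / (T ^^ j) y)"

definition ps :: "(real \<Rightarrow> real) \<Rightarrow> real \<Rightarrow> nat \<Rightarrow> real" where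
  "ps T y n = (\<Sum>j<n. tm T y j)"

lemma tm_0: "tm T y 0 = ln (1 / y)" by (simp add: tm_def)

lemma tm_Suc: "tm T y (Suc j) = y * tm T (T y) j"
  unfolding tm_def prod.lessThan_Suc_shift by (simp add: funpow_Suc_right del: funpow.simps)

lemma ps_0[simp]: "ps T y 0 = 0" by (simp add: ps_def)

lemma ps_Suc: "ps T y (Suc n) = ln (1 / y) + y * ps T (T y) n"
  unfolding ps_def sum.lessThan_Suc_shift by (simp add: tm_0 tm_Suc sum_distrib_left)

definition good :: "real \<Rightarrow> bool" where "good y \<longleftrightarrow> 0 < y \<and> y < 1 \<and> y \<notin> \<rat>"

lemma irr_inv: "y \<notin> \<rat> \<Longrightarrow> 1 / y \<notin> \<rat>"
  by (metis Rats_divide Rats_1 divide_divide_eq_right div_by_1 mult_1)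

lemma irr_sub_int: "y \<notin> \<rat> \<Longrightarrow> y - of_int k \<notin> \<rat>"
  using Rats_add Rats_of_int by (metis diff_add_cancel)

lemma irr_one_minus: assumes "y \<notin> \<rat>" shows "1 - y \<notin> \<rat>"
proof
  assume "1 - y \<in> \<rat>"
  then have "1 - (1 - y) \<in> \<rat>" using Rats_diff Rats_1 by blast
  then show False using assms by simp
qed

lemma good_gauss: "good y \<Longrightarrow> good (gauss_map y)"
proof -
  assume g: "good y"
  then have i: "1 / y \<notin> \<rat>" using irr_inv good_def by auto
  have "1/y \<notin> \<int>" using i Ints_subset_Rats by blast
  then have "frac (1/y) > 0" using frac_gt_0_iff by blast
  moreover have "frac (1/y) \<notin> \<rat>" using irr_sub_int[OF i] by (simp add: frac_def)
  ultimately show ?thesis by (simp add: good_def gauss_map_def frac_lt_1)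
qed

lemma excess_eq: "excess_map y = 1 - gauss_map y"
  by (simp add: excess_map_def gauss_map_def frac_def)

lemma good_excess: "good y \<Longrightarrow> good (excess_map y)"
  using good_gauss[of y] irr_one_minus unfolding excess_eq good_def by auto

lemma good_iter: "good y \<Longrightarrow> (\<And>w. good w \<Longrightarrow> good (T w)) \<Longrightarrow> good ((T ^^ k) y)"
  by (induction k) auto

lemma tm_nonneg: "good y \<Longrightarrow> (\<And>w. good w \<Longrightarrow> good (T w)) \<Longrightarrow> tm T y j \<ge> 0"
  unfolding tm_def
  apply (rule mult_nonneg_nonneg)
   apply (rule prod_nonneg) using good_iter good_def apply (metis less_imp_le)
  using good_iter[of y T j] by (auto simp: good_def)

lemma ps_mono: "good y \<Longrightarrow> (\<And>w. good w \<Longrightarrow> good (T w)) \<Longrightarrow> m \<le> n \<Longrightarrow> ps T y m \<le> ps T y n"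
  unfolding ps_def by (rule sum_mono2) (auto intro: tm_nonneg)

lemma ps_nonneg: "good y \<Longrightarrow> (\<And>w. good w \<Longrightarrow> good (T w)) \<Longrightarrow> ps T y n \<ge> 0"
  unfolding ps_def by (rule sum_nonneg) (auto intro: tm_nonneg)


lemma good_one_minus: "good y \<Longrightarrow> good (1 - y)"
  using irr_one_minus by (auto simp: good_def)

lemma chain_big: assumes "r > 2" shows "excess_map (1 - 1/r) = 1 - 1/(r-1)"
proof -
  have e: "1 / (1 - 1/r) = 1 + 1/(r-1)" using assms by (simp add: field_simps)
  have f1: "frac (1 + 1/(r-1)) = frac (1/(r-1))"
    using frac_1_eq[of "1/(r-1)"] by (simp add: add.commute)
  have "frac (1 + 1/(r-1)) = 1/(r-1)" unfolding f1 using assms by (subst frac_eq) (auto simp: field_simps)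
  then show ?thesis unfolding excess_eq gauss_map_def e by simp
qed

lemma chain_small: assumes "1 < r" "r < 2" shows "excess_map (1 - 1/r) = 1 - gauss_map (r-1)"
proof -
  have e: "1 / (1 - 1/r) = 1/(r-1) + 1" using assms by (simp add: field_simps)
  show ?thesis unfolding excess_eq gauss_map_def e frac_def by simp
qed

lemma ineq_small: assumes "0 < (t::real)" "t < 1" shows "(1+t) * ln ((1+t)/t) \<le> ln (1/t) + 3"
proof -
  have a: "ln ((1+t)/t) = ln (1+t) + ln (1/t)" using assms by (simp add: ln_div)
  have b: "ln (1+t) \<le> t" using ln_le_minus_one[of "1+t"] assms by simp
  have c: "ln (1/t) \<le> 1/t - 1" using ln_le_minus_one[of "1/t"] assms by simp
  have c1: "t * ln (1/t) \<le> t * (1/t - 1)" using mult_left_mono[OF c, of t] assms by simp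
  have c2: "t * (1/t - 1) = 1 - t" using assms by (simp add: field_simps)
  have c': "t * ln (1/t) \<le> 1" using c1 c2 assms by linarith
  have d: "(1+t) * ln (1+t) \<le> 2" using mult_mono[OF _ b, of "1+t" 2] assms b ln_ge_zero[of "1+t"] by auto
  show ?thesis unfolding a using c' d by (simp add: algebra_simps)
qed

lemma ineq_small2: assumes "0 < (t::real)" "t < 1" shows "(1+t) * ln ((1+t)/t) \<ge> ln (1/t)"
proof -
  have a: "ln ((1+t)/t) = ln (1+t) + ln (1/t)" using assms by (simp add: ln_div)
  have "ln (1/t) \<ge> 0" using assms by simp
  moreover have "ln (1+t) \<ge> 0" using assms by simp
  ultimately show ?thesis unfolding a using assms by (simp add: algebra_simps)
qed

lemma ineq_big: assumes "(r::real) \<ge> 2" shows "r * ln (r/(r-1)) \<le> 2" "r * ln (r/(r-1)) \<ge> 0"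
proof -
  have "ln (r/(r-1)) \<le> r/(r-1) - 1" using ln_le_minus_one[of "r/(r-1)"] assms by simp
  also have "\<dots> = 1/(r-1)" using assms by (simp add: field_simps)
  finally have "r * ln (r/(r-1)) \<le> r/(r-1)" using assms mult_left_mono by fastforce
  also have "\<dots> \<le> 2" using assms by (simp add: field_simps)
  finally show "r * ln (r/(r-1)) \<le> 2" .
  show "r * ln (r/(r-1)) \<ge> 0" using assms by (intro mult_nonneg_nonneg) auto
qed


lemma good_frac: assumes "r \<notin> \<rat>" shows "good (frac r)"
proof -
  have "r \<notin> \<int>" using assms Ints_subset_Rats by blast
  then have "frac r > 0" by simp
  moreover have "frac r \<notin> \<rat>" using irr_sub_int[OF assms, of "\<lfloor>r\<rfloor>"] by (simp add: frac_def)
  ultimately show ?thesis by (simp add: good_def frac_lt_1)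
qed

lemma ps_exc_nonneg: "good y \<Longrightarrow> ps excess_map y n \<ge> 0"
  using ps_nonneg good_excess by blast

lemma ps_step_r: assumes "r > 1"
  shows "r * ps excess_map (1 - 1/r) (Suc N) = r * ln (r/(r-1)) + (r-1) * ps excess_map (excess_map (1 - 1/r)) N"
proof -
  have e1: "1/(1-1/r) = r/(r-1)" and e2: "r * (1 - 1/r) = r - 1" using assms by (auto simp: field_simps)
  show ?thesis unfolding ps_Suc distrib_left mult.assoc[symmetric] e1 e2 ..
qed

lemma L: fixes k :: nat shows
  "\<forall>r. r \<notin> \<rat> \<and> \<lfloor>r\<rfloor> = int (Suc k) \<longrightarrow>
    (\<forall>N. r * ps excess_map (1 - 1/r) N \<le> ln (1 / frac r) + 2 * real (Suc k) + 1
          + frac r * ps excess_map (1 - gauss_map (frac r)) (N - Suc k)) \<and>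
    (\<forall>N. ln (1 / frac r) + frac r * ps excess_map (1 - gauss_map (frac r)) N
          \<le> r * ps excess_map (1 - 1/r) (N + Suc k))"
proof (induction k)
  case 0
  show ?case
  proof (intro allI impI conjI)
    fix r :: real assume a: "r \<notin> \<rat> \<and> \<lfloor>r\<rfloor> = int (Suc 0)"
    have gf: "good (frac r)" using a good_frac by blast
    have ft: "frac r = r - 1" using a by (simp add: frac_def)
    define t where "t = r - 1"
    have t01: "0 < t" "t < 1" using gf ft t_def by (auto simp: good_def)
    have r12: "1 < r" "r < 2" using t01 t_def by auto
    have gq: "good (1 - gauss_map t)" using good_one_minus good_gauss gf ft t_def by auto
    have step: "\<And>N. r * ps excess_map (1 - 1/r) (Suc N) = (1+t) * ln ((1+t)/t) + t * ps excess_map (1 - gauss_map t) N"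
      unfolding ps_step_r[OF r12(1)] chain_small[OF r12] t_def by simp
    have ln0: "ln (1/t) \<ge> 0" using t01 by simp
    fix N
    show "r * ps excess_map (1 - 1/r) N \<le> ln (1 / frac r) + 2 * real (Suc 0) + 1
          + frac r * ps excess_map (1 - gauss_map (frac r)) (N - Suc 0)"
    proof (cases N)
      case 0 then show ?thesis using ln0 ps_exc_nonneg[OF gq] t01 ft t_def
        by (simp add: mult_nonneg_nonneg)
    next
      case (Suc M) then show ?thesis using step[of M] ineq_small[OF t01] ft t_def by simp
    qed
  next
    fix r :: real assume a: "r \<notin> \<rat> \<and> \<lfloor>r\<rfloor> = int (Suc 0)"
    have gf: "good (frac r)" using a good_frac by blast
    have ft: "frac r = r - 1" using a by (simp add: frac_def)
    define t where "t = r - 1"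
    have t01: "0 < t" "t < 1" using gf ft t_def by (auto simp: good_def)
    have r12: "1 < r" "r < 2" using t01 t_def by auto
    have step: "\<And>N. r * ps excess_map (1 - 1/r) (Suc N) = (1+t) * ln ((1+t)/t) + t * ps excess_map (1 - gauss_map t) N"
      unfolding ps_step_r[OF r12(1)] chain_small[OF r12] t_def by simp
    fix N
    show "ln (1 / frac r) + frac r * ps excess_map (1 - gauss_map (frac r)) N
          \<le> r * ps excess_map (1 - 1/r) (N + Suc 0)"
      using step[of N] ineq_small2[OF t01] ft t_def by simp
  qed
next
  case (Suc k)
  show ?case
  proof (intro allI impI conjI)
    fix r :: real assume a: "r \<notin> \<rat> \<and> \<lfloor>r\<rfloor> = int (Suc (Suc k))"
    define r' where "r' = r - 1"
    have a': "r' \<notin> \<rat> \<and> \<lfloor>r'\<rfloor> = int (Suc k)" using a irr_sub_int[of r 1] r'_def by auto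
    have fr: "frac r' = frac r" unfolding r'_def by (metis frac_1_eq diff_add_cancel)
    have r2: "r \<ge> 2" using a by linarith
    have r2': "r > 2" using r2 a by (metis Rats_number_of order_le_less)
    have gf: "good (frac r)" using a good_frac by blast
    have gq: "good (1 - gauss_map (frac r))" using good_one_minus good_gauss gf by auto
    have step: "\<And>N. r * ps excess_map (1 - 1/r) (Suc N) = r * ln (r/(r-1)) + r' * ps excess_map (1 - 1/r') N"
      using ps_step_r[of r] chain_big[OF r2'] r'_def r2 by simp
    note IH = Suc.IH[rule_format, OF a', unfolded fr]
    have ln0: "ln (1/frac r) \<ge> 0" using gf by (simp add: good_def)
    fix N
    show "r * ps excess_map (1 - 1/r) N \<le> ln (1 / frac r) + 2 * real (Suc (Suc k)) + 1
          + frac r * ps excess_map (1 - gauss_map (frac r)) (N - Suc (Suc k))"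
    proof (cases N)
      case 0 then show ?thesis using ln0 ps_exc_nonneg[OF gq] gf
        by (simp add: mult_nonneg_nonneg good_def)
    next
      case (Suc M) then show ?thesis using step[of M] conjunct1[OF IH, rule_format, of M] ineq_big[OF r2] by simp
    qed
  next
    fix r :: real assume a: "r \<notin> \<rat> \<and> \<lfloor>r\<rfloor> = int (Suc (Suc k))"
    define r' where "r' = r - 1"
    have a': "r' \<notin> \<rat> \<and> \<lfloor>r'\<rfloor> = int (Suc k)" using a irr_sub_int[of r 1] r'_def by auto
    have fr: "frac r' = frac r" unfolding r'_def by (metis frac_1_eq diff_add_cancel)
    have r2: "r \<ge> 2" using a by linarith
    have r2': "r > 2" using r2 a by (metis Rats_number_of order_le_less)
    have step: "\<And>N. r * ps excess_map (1 - 1/r) (Suc N) = r * ln (r/(r-1)) + r' * ps excess_map (1 - 1/r') N"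
      using ps_step_r[of r] chain_big[OF r2'] r'_def r2 by simp
    note IH = Suc.IH[rule_format, OF a', unfolded fr]
    fix N
    have "N + Suc (Suc k) = Suc (N + Suc k)" by simp
    then show "ln (1 / frac r) + frac r * ps excess_map (1 - gauss_map (frac r)) N
          \<le> r * ps excess_map (1 - 1/r) (N + Suc (Suc k))"
      using step[of "N + Suc k"] conjunct2[OF IH, rule_format, of N] ineq_big[OF r2] by simp
  qed
qed


lemma Lz: assumes g: "good z"
  shows "\<exists>k. (\<forall>N. ps excess_map (1-z) N \<le> z * (ln (1 / gauss_map z) + 2 * real (Suc k) + 1
              + gauss_map z * ps excess_map (1 - gauss_map (gauss_map z)) (N - Suc k)))
         \<and> (\<forall>N. z * (ln (1 / gauss_map z) + gauss_map z * ps excess_map (1 - gauss_map (gauss_map z)) N)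
              \<le> ps excess_map (1-z) (N + Suc k))
         \<and> z * (2 * real (Suc k) + 1 + 8 * gauss_map z) \<le> 8"
proof -
  define r where "r = 1 / z"
  have z01: "0 < z" "z < 1" using g by (auto simp: good_def)
  have rq: "r \<notin> \<rat>" using g irr_inv by (auto simp: good_def r_def)
  have r1: "r > 1" using z01 by (simp add: r_def)
  have fl: "\<lfloor>r\<rfloor> \<ge> 1" using r1 by linarith
  define k where "k = nat \<lfloor>r\<rfloor> - 1"
  have flk: "\<lfloor>r\<rfloor> = int (Suc k)" using fl k_def by linarith
  have fr: "frac r = gauss_map z" by (simp add: gauss_map_def r_def)
  have zr: "1 - 1/r = 1 - z" by (simp add: r_def)
  have rz: "z * r = 1" using z01 by (simp add: r_def)
  note LL = L[rule_format, of r k, OF conjI[OF rq flk], unfolded fr zr]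
  have dec: "r = real (Suc k) + gauss_map z" using flk fr by (simp add: frac_def)
  have gz: "good (gauss_map z)" using good_gauss g by blast
  show ?thesis
  proof (intro exI conjI allI)
    fix N
    have "ps excess_map (1-z) N = z * (r * ps excess_map (1-z) N)" using rz by (simp add: mult.assoc[symmetric])
    also have "\<dots> \<le> z * (ln (1 / gauss_map z) + 2 * real (Suc k) + 1
              + gauss_map z * ps excess_map (1 - gauss_map (gauss_map z)) (N - Suc k))"
      using conjunct1[OF LL, rule_format, of N] z01 by (intro mult_left_mono) auto
    finally show "ps excess_map (1-z) N \<le> z * (ln (1 / gauss_map z) + 2 * real (Suc k) + 1
              + gauss_map z * ps excess_map (1 - gauss_map (gauss_map z)) (N - Suc k))" .
  next
    fix N
    have "z * (ln (1 / gauss_map z) + gauss_map z * ps excess_map (1 - gauss_map (gauss_map z)) N)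
        \<le> z * (r * ps excess_map (1-z) (N + Suc k))"
      using conjunct2[OF LL, rule_format, of N] z01 by (intro mult_left_mono) auto
    also have "\<dots> = ps excess_map (1-z) (N + Suc k)" using rz by (simp add: mult.assoc[symmetric])
    finally show "z * (ln (1 / gauss_map z) + gauss_map z * ps excess_map (1 - gauss_map (gauss_map z)) N)
        \<le> ps excess_map (1-z) (N + Suc k)" .
  next
    have e: "z * (2 * real (Suc k) + 1 + 8 * gauss_map z) = 8 * (z * r) - z * (6 * real (Suc k) - 1)"
      unfolding dec by (simp add: algebra_simps)
    have "z * (6 * real (Suc k) - 1) \<ge> 0" using z01 by (intro mult_nonneg_nonneg) auto
    then show "z * (2 * real (Suc k) + 1 + 8 * gauss_map z) \<le> 8" unfolding e rz by simp
  qed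
qed

definition Q :: "nat \<Rightarrow> real \<Rightarrow> real" where "Q M z = (\<Sum>m<M. tm gauss_map z (2*m+1))"
definition Ev :: "nat \<Rightarrow> real \<Rightarrow> real" where "Ev M z = (\<Sum>m<M. tm gauss_map z (2*m))"

lemma Q_Suc: "Q (Suc M) z = z * ln (1 / gauss_map z) + z * gauss_map z * Q M (gauss_map (gauss_map z))"
proof -
  have "\<And>m. tm gauss_map z (2 * Suc m + 1) = z * gauss_map z * tm gauss_map (gauss_map (gauss_map z)) (2*m+1)"
  proof -
    fix m have "2 * Suc m + 1 = Suc (Suc (2*m+1))" by simp
    then show "tm gauss_map z (2 * Suc m + 1) = z * gauss_map z * tm gauss_map (gauss_map (gauss_map z)) (2*m+1)"
      by (simp only: tm_Suc mult.assoc)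
  qed
  note h = this
  show ?thesis unfolding Q_def sum.lessThan_Suc_shift h
    by (simp add: tm_Suc[of gauss_map z 0] tm_0 sum_distrib_left)
qed

lemma Ev_Suc: "Ev (Suc M) z = ln (1 / z) + z * Q M (gauss_map z)"
proof -
  have "\<And>m. tm gauss_map z (2 * Suc m) = z * tm gauss_map (gauss_map z) (2*m+1)"
  proof -
    fix m have "2 * Suc m = Suc (2*m+1)" by simp
    then show "tm gauss_map z (2 * Suc m) = z * tm gauss_map (gauss_map z) (2*m+1)"
      by (simp only: tm_Suc)
  qed
  then show ?thesis unfolding Ev_def Q_def sum.lessThan_Suc_shift
    by (simp add: tm_0 sum_distrib_left)
qed

lemma up: "\<forall>z. good z \<longrightarrow> (\<exists>M. ps excess_map (1-z) N \<le> Q M z + 8)"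
proof (induction N rule: less_induct)
  case (less N)
  show ?case
  proof (intro allI impI)
    fix z assume g: "good z"
    obtain k where K: "\<forall>N. ps excess_map (1-z) N \<le> z * (ln (1 / gauss_map z) + 2 * real (Suc k) + 1
              + gauss_map z * ps excess_map (1 - gauss_map (gauss_map z)) (N - Suc k))"
      and K3: "z * (2 * real (Suc k) + 1 + 8 * gauss_map z) \<le> 8" using Lz[OF g] by blast
    show "\<exists>M. ps excess_map (1-z) N \<le> Q M z + 8"
    proof (cases N)
      case 0 then show ?thesis by (intro exI[of _ 0]) (simp add: Q_def)
    next
      case (Suc N')
      have lt: "N - Suc k < N" using Suc by simp
      have g2: "good (gauss_map (gauss_map z))" using g good_gauss by blast
      obtain M where M: "ps excess_map (1 - gauss_map (gauss_map z)) (N - Suc k) \<le> Q M (gauss_map (gauss_map z)) + 8"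
        using less.IH[OF lt, rule_format, OF g2] by blast
      have z0: "z \<ge> 0" "gauss_map z \<ge> 0" using g good_gauss[OF g] by (auto simp: good_def)
      have "ps excess_map (1-z) N \<le> z * (ln (1 / gauss_map z) + 2 * real (Suc k) + 1
              + gauss_map z * (Q M (gauss_map (gauss_map z)) + 8))"
        using K[rule_format, of N] M z0
        by (smt (verit) mult_left_mono)
      also have "\<dots> = Q (Suc M) z + z * (2 * real (Suc k) + 1 + 8 * gauss_map z)"
        unfolding Q_Suc by (simp add: algebra_simps)
      also have "\<dots> \<le> Q (Suc M) z + 8" using K3 by simp
      finally show ?thesis by blast
    qed
  qed
qed

lemma low: "\<forall>z. good z \<longrightarrow> (\<exists>N. Q M z \<le> ps excess_map (1-z) N)"
proof (induction M)
  case 0 then show ?case by (auto simp: Q_def intro: exI[of _ 0])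
next
  case (Suc M)
  show ?case
  proof (intro allI impI)
    fix z assume g: "good z"
    obtain k where K: "\<forall>N. z * (ln (1 / gauss_map z) + gauss_map z * ps excess_map (1 - gauss_map (gauss_map z)) N)
              \<le> ps excess_map (1-z) (N + Suc k)" using Lz[OF g] by blast
    have g2: "good (gauss_map (gauss_map z))" using g good_gauss by blast
    obtain N where N: "Q M (gauss_map (gauss_map z)) \<le> ps excess_map (1 - gauss_map (gauss_map z)) N"
      using Suc.IH g2 by blast
    have z0: "z \<ge> 0" "gauss_map z \<ge> 0" using g good_gauss[OF g] by (auto simp: good_def)
    have "Q (Suc M) z \<le> z * (ln (1 / gauss_map z) + gauss_map z * ps excess_map (1 - gauss_map (gauss_map z)) N)"
      unfolding Q_Suc using N z0 by (smt (verit) mult_left_mono mult_nonneg_nonneg distrib_left mult.assoc)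
    also have "\<dots> \<le> ps excess_map (1-z) (N + Suc k)" using K by blast
    finally show "\<exists>N. Q (Suc M) z \<le> ps excess_map (1-z) N" by blast
  qed
qed


lemma bnd_summable: assumes "\<And>j. a j \<ge> (0::real)" "\<And>n. sum a {..<n} \<le> K" shows "summable a"
proof (rule bounded_imp_summable[of a K])
  show "\<And>n. 0 \<le> a n" by fact
  fix n show "sum a {..n} \<le> K" using assms(2)[of "Suc n"] by (simp add: lessThan_Suc_atMost)
qed

lemma NN: assumes "\<And>j. a j \<ge> (0::real)"
  shows "(\<Sum>j. ereal (a j)) < \<infinity> \<longleftrightarrow> (\<exists>K. \<forall>n. sum a {..<n} \<le> K)"
proof
  assume "(\<Sum>j. ereal (a j)) < \<infinity>"
  then have "summable a" using summable_ereal[of a] assms by auto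
  then show "\<exists>K. \<forall>n. sum a {..<n} \<le> K" using sum_le_suminf[of a] assms by blast
next
  assume "\<exists>K. \<forall>n. sum a {..<n} \<le> K"
  then obtain K where "\<forall>n. sum a {..<n} \<le> K" by blast
  then have "summable a" using bnd_summable[of a K] assms by blast
  then show "(\<Sum>j. ereal (a j)) < \<infinity>" using suminf_ereal_finite less_top by auto
qed

lemma ereal_of_summable: assumes "\<And>j. a j \<ge> (0::real)" "\<And>n. sum a {..<n} \<le> K"
  shows "summable a" "(\<Sum>j. ereal (a j)) = ereal (suminf a)"
  using bnd_summable[OF assms] suminf_ereal' by auto

lemma upF: assumes g: "good y" shows "\<exists>M. ps excess_map y N \<le> Ev M y + 8"
proof (cases N)
  case 0 then show ?thesis by (intro exI[of _ 0]) (simp add: Ev_def)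
next
  case (Suc N')
  have gz: "good (gauss_map y)" using good_gauss g by blast
  obtain M where M: "ps excess_map (1 - gauss_map y) N' \<le> Q M (gauss_map y) + 8" using up gz by blast
  have y01: "0 < y" "y < 1" using g by (auto simp: good_def)
  have "ps excess_map y N = ln (1/y) + y * ps excess_map (1 - gauss_map y) N'"
    unfolding Suc ps_Suc excess_eq ..
  also have "\<dots> \<le> ln (1/y) + y * (Q M (gauss_map y) + 8)" using M y01 by (simp add: mult_left_mono)
  also have "\<dots> \<le> Ev (Suc M) y + 8" unfolding Ev_Suc using y01 by (simp add: algebra_simps)
  finally show ?thesis by blast
qed

lemma lowF: assumes g: "good y" shows "\<exists>N. Ev M y \<le> ps excess_map y N"
proof (cases M)
  case 0 then show ?thesis by (intro exI[of _ 0]) (simp add: Ev_def)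
next
  case (Suc M')
  have gz: "good (gauss_map y)" using good_gauss g by blast
  obtain N where N: "Q M' (gauss_map y) \<le> ps excess_map (1 - gauss_map y) N" using low gz by blast
  have y01: "0 < y" "y < 1" using g by (auto simp: good_def)
  have "Ev M y = ln (1/y) + y * Q M' (gauss_map y)" unfolding Suc Ev_Suc ..
  also have "\<dots> \<le> ln (1/y) + y * ps excess_map (1 - gauss_map y) N" using N y01 by (simp add: mult_left_mono)
  also have "\<dots> = ps excess_map y (Suc N)" unfolding ps_Suc excess_eq ..
  finally show ?thesis by blast
qed

lemma ps_even: "ps gauss_map y (2*M) = Ev M y + Q M y"
  by (induction M) (auto simp: ps_def Ev_def Q_def)

lemma wp_even: "(\<Sum>j<2*M. (-1)^j * tm gauss_map y j) = Ev M y - Q M y"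
  by (induction M) (auto simp: Ev_def Q_def)



lemma main_y: assumes g: "good y"
  shows "((\<Sum>j. ereal (tm gauss_map y j)) < \<infinity> \<longleftrightarrow>
           (\<Sum>j. ereal (tm excess_map y j)) + (\<Sum>j. ereal (tm excess_map (1-y) j)) < \<infinity>) \<and>
    ((\<Sum>j. ereal (tm gauss_map y j)) < \<infinity> \<longrightarrow>
      \<bar>real_of_ereal (\<Sum>j. ereal (tm gauss_map y j)) - (real_of_ereal (\<Sum>j. ereal (tm excess_map y j))
         + real_of_ereal (\<Sum>j. ereal (tm excess_map (1-y) j)))\<bar> \<le> 16) \<and>
    ((\<Sum>j. ereal (tm excess_map y j)) < \<infinity> \<and> (\<Sum>j. ereal (tm excess_map (1-y) j)) < \<infinity> \<longrightarrow>
      convergent (\<lambda>n. \<Sum>j<n. (-1)^j * tm gauss_map y j) \<and>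
      \<bar>lim (\<lambda>n. \<Sum>j<n. (-1)^j * tm gauss_map y j) - (real_of_ereal (\<Sum>j. ereal (tm excess_map y j))
         - real_of_ereal (\<Sum>j. ereal (tm excess_map (1-y) j)))\<bar> \<le> 16)"
proof -
  define b where "b = tm gauss_map y"
  define f where "f = tm excess_map y"
  define u where "u = tm excess_map (1-y)"
  define e where "e = (\<lambda>m. b (2*m))"
  define q where "q = (\<lambda>m. b (2*m+1))"
  have g1: "good (1-y)" using good_one_minus g by blast
  have b0: "\<And>j. b j \<ge> 0" unfolding b_def using tm_nonneg g good_gauss by blast
  have f0: "\<And>j. f j \<ge> 0" unfolding f_def using tm_nonneg g good_excess by blast
  have u0: "\<And>j. u j \<ge> 0" unfolding u_def using tm_nonneg g1 good_excess by blast
  have e0: "\<And>j. e j \<ge> 0" and q0: "\<And>j. q j \<ge> 0" unfolding e_def q_def using b0 by auto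
  have Ev: "\<And>M. Ev M y = sum e {..<M}" unfolding Ev_def e_def b_def ..
  have Qe: "\<And>M. Q M y = sum q {..<M}" unfolding Q_def q_def b_def ..
  have psb: "\<And>n. ps gauss_map y n = sum b {..<n}" unfolding ps_def b_def ..
  have psf: "\<And>n. ps excess_map y n = sum f {..<n}" unfolding ps_def f_def ..
  have psu: "\<And>n. ps excess_map (1-y) n = sum u {..<n}" unfolding ps_def u_def ..
  have se0: "\<And>M. sum e {..<M} \<ge> 0" and sq0: "\<And>M. sum q {..<M} \<ge> 0"
    using e0 q0 by (auto intro: sum_nonneg)
  have ev2: "\<And>M. sum b {..<2*M} = sum e {..<M} + sum q {..<M}" using ps_even psb Ev Qe by metis
  have upf: "\<And>N. \<exists>M. sum f {..<N} \<le> sum e {..<M} + 8" using upF[OF g] psf Ev by metis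
  have lowf: "\<And>M. \<exists>N. sum e {..<M} \<le> sum f {..<N}" using lowF[OF g] psf Ev by metis
  have upu: "\<And>N. \<exists>M. sum u {..<N} \<le> sum q {..<M} + 8"
    using up[rule_format, OF g] psu Qe by (metis cancel_comm_monoid_add_class.diff_cancel diff_zero)
  have lowu: "\<And>M. \<exists>N. sum q {..<M} \<le> sum u {..<N}"
    using low[rule_format, OF g] psu Qe by metis
  define bnd where "bnd = (\<lambda>a::nat\<Rightarrow>real. \<exists>K. \<forall>n. sum a {..<n} \<le> K)"
  have fe: "bnd f \<longleftrightarrow> bnd e"
  proof
    assume "bnd f" then obtain K where K: "\<forall>n. sum f {..<n} \<le> K" unfolding bnd_def by blast
    show "bnd e" unfolding bnd_def using K lowf by (meson order_trans)
  next
    assume "bnd e" then obtain K where K: "\<forall>n. sum e {..<n} \<le> K" unfolding bnd_def by blast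
    have "\<forall>n. sum f {..<n} \<le> K + 8" using K upf by (meson add_right_mono order_trans)
    then show "bnd f" unfolding bnd_def by blast
  qed
  have uq: "bnd u \<longleftrightarrow> bnd q"
  proof
    assume "bnd u" then obtain K where K: "\<forall>n. sum u {..<n} \<le> K" unfolding bnd_def by blast
    show "bnd q" unfolding bnd_def using K lowu by (meson order_trans)
  next
    assume "bnd q" then obtain K where K: "\<forall>n. sum q {..<n} \<le> K" unfolding bnd_def by blast
    have "\<forall>n. sum u {..<n} \<le> K + 8" using K upu by (meson add_right_mono order_trans)
    then show "bnd u" unfolding bnd_def by blast
  qed
  have beq: "bnd b \<longleftrightarrow> bnd e \<and> bnd q"
  proof
    assume "bnd b" then obtain K where K: "\<forall>n. sum b {..<n} \<le> K" unfolding bnd_def by blast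
    have "\<forall>n. sum e {..<n} \<le> K"
    proof
      fix n
      show "sum e {..<n} \<le> K" using K[rule_format, of "2*n"] ev2[of n] sq0[of n] by linarith
    qed
    moreover have "\<forall>n. sum q {..<n} \<le> K"
    proof
      fix n
      show "sum q {..<n} \<le> K" using K[rule_format, of "2*n"] ev2[of n] se0[of n] by linarith
    qed
    ultimately
    show "bnd e \<and> bnd q" unfolding bnd_def by blast
  next
    assume "bnd e \<and> bnd q"
    then obtain K1 K2 where K1: "\<forall>n. sum e {..<n} \<le> K1" and K2: "\<forall>n. sum q {..<n} \<le> K2" unfolding bnd_def by blast
    have "\<forall>n. sum b {..<n} \<le> K1 + K2"
    proof
      fix n
      have "sum b {..<n} \<le> sum b {..<2*n}" using b0 by (intro sum_mono2) auto
      also have "\<dots> \<le> K1 + K2" unfolding ev2 using K1 K2 by (simp add: add_mono)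
      finally show "sum b {..<n} \<le> K1 + K2" .
    qed
    then show "bnd b" unfolding bnd_def by blast
  qed
  have NNb: "(\<Sum>j. ereal (b j)) < \<infinity> \<longleftrightarrow> bnd b" using NN[OF b0] bnd_def by simp
  have NNf: "(\<Sum>j. ereal (f j)) < \<infinity> \<longleftrightarrow> bnd f" using NN[OF f0] bnd_def by simp
  have NNu: "(\<Sum>j. ereal (u j)) < \<infinity> \<longleftrightarrow> bnd u" using NN[OF u0] bnd_def by simp
  have fin: "\<And>a::nat\<Rightarrow>real. (\<And>j. a j \<ge> 0) \<Longrightarrow> (\<Sum>j. ereal (a j)) \<noteq> -\<infinity>"
  proof -
    fix a :: "nat \<Rightarrow> real" assume "\<And>j. a j \<ge> 0"
    then have "(\<Sum>j. ereal (a j)) \<ge> 0" by (intro suminf_nonneg summable_ereal_pos) auto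
    then show "(\<Sum>j. ereal (a j)) \<noteq> -\<infinity>" by auto
  qed
  have part1: "(\<Sum>j. ereal (b j)) < \<infinity> \<longleftrightarrow> (\<Sum>j. ereal (f j)) + (\<Sum>j. ereal (u j)) < \<infinity>"
  proof -
    have "(\<Sum>j. ereal (f j)) + (\<Sum>j. ereal (u j)) < \<infinity> \<longleftrightarrow> (\<Sum>j. ereal (f j)) < \<infinity> \<and> (\<Sum>j. ereal (u j)) < \<infinity>"
      using fin[OF f0] fin[OF u0] by (cases "\<Sum>j. ereal (f j)"; cases "\<Sum>j. ereal (u j)") auto
    then show ?thesis using NNb NNf NNu fe uq beq by blast
  qed
  have vals: "bnd e \<Longrightarrow> bnd q \<Longrightarrow>
     summable b \<and> summable f \<and> summable u \<and> summable e \<and> summable q \<and>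
     suminf b = suminf e + suminf q \<and> suminf e \<le> suminf f \<and> suminf f \<le> suminf e + 8 \<and>
     suminf q \<le> suminf u \<and> suminf u \<le> suminf q + 8"
  proof -
    assume be: "bnd e" and bq: "bnd q"
    have bb: "bnd b" "bnd f" "bnd u" using be bq fe uq beq by auto
    have S: "summable b" "summable f" "summable u" "summable e" "summable q"
      using bb be bq b0 f0 u0 e0 q0 bnd_summable unfolding bnd_def by metis+
    have pe: "\<And>M. sum e {..<M} \<le> suminf e" using sum_le_suminf[OF S(4)] e0 by blast
    have pq: "\<And>M. sum q {..<M} \<le> suminf q" using sum_le_suminf[OF S(5)] q0 by blast
    have pf: "\<And>M. sum f {..<M} \<le> suminf f" using sum_le_suminf[OF S(2)] f0 by blast
    have pu: "\<And>M. sum u {..<M} \<le> suminf u" using sum_le_suminf[OF S(3)] u0 by blast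
    have i1: "suminf e \<le> suminf f"
      by (rule suminf_le_const[OF S(4)]) (meson lowf pf order_trans)
    have i2: "suminf f \<le> suminf e + 8"
      by (rule suminf_le_const[OF S(2)]) (meson upf pe add_right_mono order_trans)
    have i3: "suminf q \<le> suminf u"
      by (rule suminf_le_const[OF S(5)]) (meson lowu pu order_trans)
    have i4: "suminf u \<le> suminf q + 8"
      by (rule suminf_le_const[OF S(3)]) (meson upu pq add_right_mono order_trans)
    have l1: "(\<lambda>M. sum b {..<2*M}) \<longlonglongrightarrow> suminf b"
      using LIMSEQ_subseq_LIMSEQ[OF summable_LIMSEQ[OF S(1)], of "\<lambda>M. 2*M"]
      by (simp add: strict_mono_def o_def)
    have l2: "(\<lambda>M. sum b {..<2*M}) \<longlonglongrightarrow> suminf e + suminf q"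
      unfolding ev2 by (intro tendsto_add summable_LIMSEQ S)
    have "suminf b = suminf e + suminf q" using LIMSEQ_unique[OF l1 l2] .
    then show ?thesis using S i1 i2 i3 i4 by blast
  qed
  have part2: "(\<Sum>j. ereal (b j)) < \<infinity> \<longrightarrow>
      \<bar>real_of_ereal (\<Sum>j. ereal (b j)) - (real_of_ereal (\<Sum>j. ereal (f j)) + real_of_ereal (\<Sum>j. ereal (u j)))\<bar> \<le> 16"
  proof
    assume "(\<Sum>j. ereal (b j)) < \<infinity>"
    then have be: "bnd e" "bnd q" using NNb beq by auto
    note V = vals[OF be]
    have "(\<Sum>j. ereal (b j)) = ereal (suminf b)" "(\<Sum>j. ereal (f j)) = ereal (suminf f)"
      "(\<Sum>j. ereal (u j)) = ereal (suminf u)" using V suminf_ereal' by auto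
    then show "\<bar>real_of_ereal (\<Sum>j. ereal (b j)) - (real_of_ereal (\<Sum>j. ereal (f j)) + real_of_ereal (\<Sum>j. ereal (u j)))\<bar> \<le> 16"
      using V by simp
  qed
  have part3: "(\<Sum>j. ereal (f j)) < \<infinity> \<and> (\<Sum>j. ereal (u j)) < \<infinity> \<longrightarrow>
      convergent (\<lambda>n. \<Sum>j<n. (-1)^j * b j) \<and>
      \<bar>lim (\<lambda>n. \<Sum>j<n. (-1)^j * b j) - (real_of_ereal (\<Sum>j. ereal (f j)) - real_of_ereal (\<Sum>j. ereal (u j)))\<bar> \<le> 16"
  proof
    assume "(\<Sum>j. ereal (f j)) < \<infinity> \<and> (\<Sum>j. ereal (u j)) < \<infinity>"
    then have be: "bnd e" "bnd q" using NNf NNu fe uq by auto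
    note V = vals[OF be]
    have ef: "(\<Sum>j. ereal (f j)) = ereal (suminf f)"
      "(\<Sum>j. ereal (u j)) = ereal (suminf u)" using V suminf_ereal' by auto
    have sw: "summable (\<lambda>j. (-1)^j * b j)"
      by (rule summable_rabs_cancel) (use V b0 in \<open>simp add: abs_mult\<close>)
    have l1: "(\<lambda>n. \<Sum>j<n. (-1)^j * b j) \<longlonglongrightarrow> suminf (\<lambda>j. (-1)^j * b j)"
      using summable_LIMSEQ[OF sw] .
    have l1': "(\<lambda>M. \<Sum>j<2*M. (-1)^j * b j) \<longlonglongrightarrow> suminf (\<lambda>j. (-1)^j * b j)"
      using LIMSEQ_subseq_LIMSEQ[OF l1, of "\<lambda>M. 2*M"] by (simp add: strict_mono_def o_def)
    have w2: "\<And>M. (\<Sum>j<2*M. (-1)^j * b j) = sum e {..<M} - sum q {..<M}"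
      using wp_even Ev Qe b_def by metis
    have l2: "(\<lambda>M. \<Sum>j<2*M. (-1)^j * b j) \<longlonglongrightarrow> suminf e - suminf q"
      unfolding w2 using V by (intro tendsto_diff summable_LIMSEQ) auto
    have eq: "suminf (\<lambda>j. (-1)^j * b j) = suminf e - suminf q" using LIMSEQ_unique[OF l1' l2] .
    have "convergent (\<lambda>n. \<Sum>j<n. (-1)^j * b j)" using l1 convergent_def by blast
    moreover have "lim (\<lambda>n. \<Sum>j<n. (-1)^j * b j) = suminf e - suminf q" using limI[OF l1] eq by simp
    ultimately show "convergent (\<lambda>n. \<Sum>j<n. (-1)^j * b j) \<and>
      \<bar>lim (\<lambda>n. \<Sum>j<n. (-1)^j * b j) - (real_of_ereal (\<Sum>j. ereal (f j)) - real_of_ereal (\<Sum>j. ereal (u j)))\<bar> \<le> 16"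
      using V ef by (auto simp: abs_le_iff)
  qed
  show ?thesis using part1 part2 part3 unfolding b_def f_def u_def by blast
qed

lemma h2: "2 * ((a::real) / 2) = a" by simp

lemma bt: "brjuno_term T x j = tm T (frac x) j"
  by (simp add: brjuno_term_def tm_def)

theorem theorem1:
  shows "\<exists>Cp Cm :: real. Cp > 0 \<and> Cm > 0 \<and>
    (\<forall>x :: real. x \<notin> \<rat> \<longrightarrow>
      ((brjuno x < \<infinity> \<longleftrightarrow> semi_brjuno x + semi_brjuno (- x) < \<infinity>) \<and>
       (brjuno x < \<infinity> \<longrightarrow>
          \<bar>real_of_ereal (brjuno x)
             - 2 * ((real_of_ereal (semi_brjuno x) + real_of_ereal (semi_brjuno (- x))) / 2)\<bar> \<le> Cp) \<and>
       (semi_brjuno x < \<infinity> \<and> semi_brjuno (- x) < \<infinity> \<longrightarrow>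
          wilton_converges x \<and>
          \<bar>wilton x
             - 2 * ((real_of_ereal (semi_brjuno x) - real_of_ereal (semi_brjuno (- x))) / 2)\<bar> \<le> Cm)))"
proof (intro exI[of _ 16] conjI allI impI)
  fix x :: real assume xq: "x \<notin> \<rat>"
  have g: "good (frac x)" using good_frac[OF xq] .
  have "x \<notin> \<int>" using xq Ints_subset_Rats by blast
  then have fn: "frac (- x) = 1 - frac x" by (simp add: frac_neg)
  have eB: "brjuno x = (\<Sum>j. ereal (tm gauss_map (frac x) j))" unfolding brjuno_def bt ..
  have eF: "semi_brjuno x = (\<Sum>j. ereal (tm excess_map (frac x) j))" unfolding semi_brjuno_def bt ..
  have eU: "semi_brjuno (-x) = (\<Sum>j. ereal (tm excess_map (1 - frac x) j))" unfolding semi_brjuno_def bt fn ..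
  have eW: "wilton_partial x = (\<lambda>n. \<Sum>j<n. (-1)^j * tm gauss_map (frac x) j)"
    unfolding wilton_partial_def bt ..
  have M: "(brjuno x < \<infinity> \<longleftrightarrow> semi_brjuno x + semi_brjuno (- x) < \<infinity>) \<and>
    (brjuno x < \<infinity> \<longrightarrow> \<bar>real_of_ereal (brjuno x) - (real_of_ereal (semi_brjuno x) + real_of_ereal (semi_brjuno (- x)))\<bar> \<le> 16) \<and>
    (semi_brjuno x < \<infinity> \<and> semi_brjuno (- x) < \<infinity> \<longrightarrow> convergent (wilton_partial x) \<and>
      \<bar>lim (wilton_partial x) - (real_of_ereal (semi_brjuno x) - real_of_ereal (semi_brjuno (- x)))\<bar> \<le> 16)"
    unfolding eB eF eU eW by (rule main_y[OF g])
  show "brjuno x < \<infinity> \<longleftrightarrow> semi_brjuno x + semi_brjuno (- x) < \<infinity>" using M by blast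
  show "brjuno x < \<infinity> \<Longrightarrow> \<bar>real_of_ereal (brjuno x)
             - 2 * ((real_of_ereal (semi_brjuno x) + real_of_ereal (semi_brjuno (- x))) / 2)\<bar> \<le> 16"
    using M unfolding h2 by blast
  show "semi_brjuno x < \<infinity> \<and> semi_brjuno (- x) < \<infinity> \<Longrightarrow> wilton_converges x"
    using M unfolding wilton_converges_def by blast
  show "semi_brjuno x < \<infinity> \<and> semi_brjuno (- x) < \<infinity> \<Longrightarrow> \<bar>wilton x
             - 2 * ((real_of_ereal (semi_brjuno x) - real_of_ereal (semi_brjuno (- x))) / 2)\<bar> \<le> 16"
    using M unfolding wilton_def unfolding h2 by blast
qed (rule zero_less_numeral)+

end
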